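(* Let $U\in\mathsf{U}(\mathcal{H}_A\otimes\mathcal{H}_B)$ and let $U=\sum_{i=1}^mc_iV_i\otimes W_i$ with $c_i>0$, $V_i\in\mathsf{U}(\mathcal{H}_A)$, $W_i\in\mathsf{U}(\mathcal{H}_B)$; set $\phi:=2\|c\|_1^2-\|c\|_2^2$. Let $E$ be an additional system, $X\in\mathsf{L}(\mathcal{H}_{ABE})$ a Hermitian observable, and $\rho\in\mathsf{D}(\mathcal{H}_{ABE})$. Run the random double Hadamard test circuit described in the context on $\rho$, and let $\boldsymbol{y}\in\mathrm{spec}(X)$ be the outcome of measuring $X$ on $ABE$ and $\boldsymbol{b}=\boldsymbol{b}_1\boldsymbol{b}_2\in\{0,1\}^2$ the outcome of measuring $R_AR_B$ in the computational basis. Then $\hat{\boldsymbol{\mu}}:=\phi\,(-1)^{\boldsymbol{g}+\boldsymbol{b}_1+\boldsymbol{b}_2}\boldsymbol{y}$ is an unbiased estimator of $\mu:=\mathrm{Tr}(XU_{AB}\rho_{ABE}U_{AB}^\dagger)$.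
   Context: Random setting: sample $(\boldsymbol{i},\boldsymbol{j},\boldsymbol{g})\in[m]^2\times\{0,1\}$ with probability $p(i,j,g)=0$ if $i=j$ and $g=1$, and $p(i,j,g)=c_ic_j/\phi$ otherwise. Given $(i,j,g)$, the circuit uses ancilla qubits $R_A,R_B$ initialized in $|0\rangle$: apply a Hadamard gate to each of $R_A,R_B$; if $g=1$ apply the phase gate $S=\mathrm{diag}(1,\mathrm{i})$ to each of $R_A,R_B$ (nothing if $g=0$); apply $|0\rangle\langle0|_{R_A}\otimes V_i+|1\rangle\langle1|_{R_A}\otimes V_j$ on $R_AA$ and $|0\rangle\langle0|_{R_B}\otimes W_i+|1\rangle\langle1|_{R_B}\otimes W_j$ on $R_BB$; apply a Hadamard gate to each of $R_A,R_B$; then measure $R_A,R_B$ in the computational basis and $ABE$ with respect to $X$ (identity acts on $E$ throughout). *)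

theory Defs
  imports "HOL-Analysis.Analysis"
begin

text \<open>Finite-dimensional operators: a system with orthonormal basis indexed by a finite
type 'n has operators complex^'n^'n.  Composite systems are indexed by product types.
Qubits are indexed by bool (False = |0>, True = |1>).\<close>

definition cadj :: "complex^'n^'m \<Rightarrow> complex^'m^'n" where
  "cadj M = (\<chi> i j. cnj (M $ j $ i))"

definition unitary_op :: "complex^'n^'n \<Rightarrow> bool" where
  "unitary_op M \<longleftrightarrow> cadj M ** M = mat 1 \<and> M ** cadj M = mat 1"

definition hermitian_op :: "complex^'n^'n \<Rightarrow> bool" where
  "hermitian_op M \<longleftrightarrow> cadj M = M"

definition ctrace :: "complex^'n^'n \<Rightarrow> complex" where
  "ctrace M = (\<Sum>i\<in>UNIV. M $ i $ i)"

definition psd_op :: "complex^'n^'n \<Rightarrow> bool" where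
  "psd_op M \<longleftrightarrow> (\<forall>v::complex^'n. let q = (\<Sum>i\<in>UNIV. \<Sum>j\<in>UNIV. cnj (v $ i) * M $ i $ j * v $ j)
                     in Im q = 0 \<and> Re q \<ge> 0)"

definition density_op :: "complex^'n^'n \<Rightarrow> bool" where
  "density_op M \<longleftrightarrow> hermitian_op M \<and> psd_op M \<and> ctrace M = 1"

definition kron :: "complex^'a^'a \<Rightarrow> complex^'b^'b \<Rightarrow> complex^('a\<times>'b)^('a\<times>'b)" where
  "kron M N = (\<chi> p q. M $ fst p $ fst q * N $ snd p $ snd q)"

definition basis_proj :: "'n \<Rightarrow> complex^'n^'n" where
  "basis_proj r = (\<chi> p q. if p = r \<and> q = r then 1 else 0)"

definition hadamard :: "complex^bool^bool" where
  "hadamard = (\<chi> a b. (if a \<and> b then -1 else 1) / complex_of_real (sqrt 2))"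

definition phase_S :: "complex^bool^bool" where
  "phase_S = (\<chi> a b. if a = b then (if a then \<i> else 1) else 0)"

text \<open>The circuit unitary of the random double Hadamard test for a given (i,j,g),
acting on R_A R_B (index type bool \<times> bool) tensor ABE.  The two controlled unitaries
|0><0|_{R_A} \<otimes> V_i + |1><1|_{R_A} \<otimes> V_j and |0><0|_{R_B} \<otimes> W_i + |1><1|_{R_B} \<otimes> W_j
(identity elsewhere) are written jointly.\<close>
definition dh_ctrl ::
  "complex^'a::finite^'a \<Rightarrow> complex^'a^'a \<Rightarrow> complex^'b^'b \<Rightarrow> complex^'b^'b
   \<Rightarrow> complex^((bool\<times>bool)\<times>(('a\<times>'b)\<times>'e::finite))^((bool\<times>bool)\<times>(('a\<times>'b)\<times>'e))" where
  "dh_ctrl Vi Vj Wi Wj =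
     (\<Sum>r\<in>UNIV. kron (basis_proj r)
        (kron (kron (if fst r then Vj else Vi) (if snd r then Wj else Wi)) (mat 1)))"

definition dh_circuit ::
  "complex^'a::finite^'a \<Rightarrow> complex^'a^'a \<Rightarrow> complex^'b^'b \<Rightarrow> complex^'b^'b \<Rightarrow> bool
   \<Rightarrow> complex^((bool\<times>bool)\<times>(('a\<times>'b)\<times>'e::finite))^((bool\<times>bool)\<times>(('a\<times>'b)\<times>'e))" where
  "dh_circuit Vi Vj Wi Wj g =
     kron (kron hadamard hadamard) (mat 1)
     ** dh_ctrl Vi Vj Wi Wj
     ** (if g then kron (kron phase_S phase_S) (mat 1) else mat 1)
     ** kron (kron hadamard hadamard) (mat 1)"

definition dh_output ::
  "complex^'a::finite^'a \<Rightarrow> complex^'a^'a \<Rightarrow> complex^'b^'b \<Rightarrow> complex^'b^'b \<Rightarrow> bool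
   \<Rightarrow> complex^(('a\<times>'b)\<times>'e::finite)^(('a\<times>'b)\<times>'e)
   \<Rightarrow> complex^((bool\<times>bool)\<times>(('a\<times>'b)\<times>'e))^((bool\<times>bool)\<times>(('a\<times>'b)\<times>'e))" where
  "dh_output Vi Vj Wi Wj g \<rho> =
     dh_circuit Vi Vj Wi Wj g ** kron (basis_proj (False, False)) \<rho>
       ** cadj (dh_circuit Vi Vj Wi Wj g)"

end

theory Submission
  imports Defs
begin

lemma mult_entry: "(A ** B) $ i $ j = (\<Sum>k\<in>UNIV. A$i$k * B$k$j)"
  by (simp add: matrix_matrix_mult_def)

lemma kron_mult: "kron A B ** kron C D = kron (A ** C) (B ** D)"
proof -
  have "(kron A B ** kron C D) $ p $ q = kron (A ** C) (B ** D) $ p $ q" for p q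
  proof -
    have "(kron A B ** kron C D) $ p $ q = (\<Sum>k\<in>UNIV\<times>UNIV. (A$fst p$fst k * C$fst k$fst q) * (B$snd p$snd k * D$snd k$snd q))"
      by (simp add: kron_def matrix_matrix_mult_def algebra_simps)
    also have "\<dots> = (\<Sum>k1\<in>UNIV. A$fst p$k1 * C$k1$fst q) * (\<Sum>k2\<in>UNIV. B$snd p$k2 * D$k2$snd q)"
      by (simp add: sum_product sum.cartesian_product case_prod_beta)
    also have "\<dots> = kron (A ** C) (B ** D) $ p $ q" by (simp add: kron_def matrix_matrix_mult_def)
    finally show ?thesis .
  qed
  thus ?thesis by (simp add: vec_eq_iff)
qed
lemma kron_sum_left: "kron (\<Sum>x\<in>I. f x) B = (\<Sum>x\<in>I. kron (f x) B)"
  unfolding kron_def by (simp add: vec_eq_iff sum_component sum_distrib_right)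

lemma kron_sum_right: "kron A (\<Sum>x\<in>I. f x) = (\<Sum>x\<in>I. kron A (f x))"
  unfolding kron_def by (simp add: vec_eq_iff sum_component sum_distrib_left)

lemma sc_entry: "((c::real) *\<^sub>R (A::complex^'n^'m)) $ i $ j = of_real c * A $ i $ j"
  by (simp only: vector_scaleR_component) (simp add: scaleR_conv_of_real)

lemma kron_scaleR_left: "kron (c *\<^sub>R A) B = c *\<^sub>R kron A B"
  unfolding kron_def by (simp add: vec_eq_iff sc_entry)

lemma mult_sum_right: "A ** (\<Sum>x\<in>I. f x) = (\<Sum>x\<in>I. A ** f x)"
  by (simp add: vec_eq_iff matrix_matrix_mult_def sum_component sum_distrib_left sum.swap[of _ I])

lemma mult_sum_left: "(\<Sum>x\<in>I. f x) ** B = (\<Sum>x\<in>I. f x ** B)"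
  by (simp add: vec_eq_iff matrix_matrix_mult_def sum_component sum_distrib_right sum.swap[of _ I])

lemma mult_scaleR_left: "(c *\<^sub>R A) ** (B::complex^_^_) = c *\<^sub>R (A ** B)"
  by (simp add: vec_eq_iff matrix_matrix_mult_def scaleR_sum_right mult_ac)

lemma mult_scaleR_right: "(A::complex^_^_) ** (c *\<^sub>R B) = c *\<^sub>R (A ** B)"
  by (simp add: vec_eq_iff matrix_matrix_mult_def scaleR_sum_right mult_ac)

lemma cadj_mult: "cadj (A ** B) = cadj B ** cadj A"
  by (simp add: cadj_def vec_eq_iff matrix_matrix_mult_def mult_ac)

lemma cadj_sum: "cadj (\<Sum>x\<in>I. f x) = (\<Sum>x\<in>I. cadj (f x))"
  by (simp add: cadj_def vec_eq_iff sum_component)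

lemma cadj_scaleR: "cadj (c *\<^sub>R A) = c *\<^sub>R cadj A"
  by (simp add: cadj_def vec_eq_iff sc_entry)

lemma cadj_kron: "cadj (kron A B) = kron (cadj A) (cadj B)"
  by (simp add: cadj_def kron_def vec_eq_iff)

lemma cadj_mat1: "cadj (mat 1 :: complex^'n^'n) = mat 1"
  by (simp add: cadj_def mat_def vec_eq_iff)

lemma ctrace_sum: "ctrace (\<Sum>x\<in>I. f x) = (\<Sum>x\<in>I. ctrace (f x))"
  by (simp add: ctrace_def sum_component sum.swap[of _ I])

lemma ctrace_scaleR: "ctrace (c *\<^sub>R A) = of_real c * ctrace A"
  unfolding ctrace_def by (simp add: scaleR_sum_right[symmetric]) (simp add: scaleR_conv_of_real)

lemma ctrace_kron: "ctrace (kron A B) = ctrace A * ctrace B"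
proof -
  have "ctrace (kron A B) = (\<Sum>k\<in>UNIV\<times>UNIV. A$fst k$fst k * B$snd k$snd k)"
    by (simp add: ctrace_def kron_def)
  also have "\<dots> = ctrace A * ctrace B"
    by (simp add: ctrace_def sum_product sum.cartesian_product case_prod_beta)
  finally show ?thesis .
qed

lemma kron_mat1: "kron (mat 1) (mat 1) = mat 1"
  by (auto simp: kron_def mat_def vec_eq_iff prod_eq_iff)

lemma basis_proj_pair: "basis_proj (r1, r2) = kron (basis_proj r1) (basis_proj r2)"
  by (auto simp: kron_def basis_proj_def vec_eq_iff prod_eq_iff)



lemma sqrt2c: "complex_of_real (sqrt 2) * complex_of_real (sqrt 2) = 2"
  by (simp flip: of_real_mult)

lemma proj_trace: "ctrace (basis_proj b ** M ** basis_proj c ** cadj N) = M$b$c * cnj (N$b$c)"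
proof -
  have e1: "(basis_proj b ** M) $ p $ q = (if p = b then M$b$q else 0)" for p q
    by (simp add: matrix_matrix_mult_def basis_proj_def if_distrib[of "\<lambda>x. x * _"] cong: if_cong)
  have e2: "(basis_proj b ** M ** basis_proj c) $ p $ q = (if p = b \<and> q = c then M$b$c else 0)" for p q
    unfolding mult_entry[of "basis_proj b ** M"] e1
    by (cases "p = b"; cases "q = c"; simp add: basis_proj_def if_distrib[of "\<lambda>x. _ * x"] cong: if_cong)
  have e3: "(basis_proj b ** M ** basis_proj c ** cadj N) $ p $ q = (if p = b then M$b$c * cnj (N$q$c) else 0)" for p q
    unfolding mult_entry[of "basis_proj b ** M ** basis_proj c"] e2
    by (simp add: cadj_def if_distrib[of "\<lambda>x. x * _"] cong: if_cong)
  show ?thesis by (simp add: ctrace_def e3)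
qed

definition amat :: "bool \<Rightarrow> bool \<Rightarrow> complex^bool^bool" where
  "amat g x = hadamard ** basis_proj x ** (if g then phase_S else mat 1) ** hadamard"

lemma amat_entry: "amat g x $ p $ q = (if g \<and> x then \<i> else 1) * (if p \<and> x then -1 else 1) * (if x \<and> q then -1 else 1) / 2"
  unfolding amat_def
  by (cases g; cases x; cases p; cases q;
      simp add: matrix_matrix_mult_def UNIV_bool hadamard_def basis_proj_def phase_S_def mat_def sqrt2c field_simps)

lemma basis_proj_split: "basis_proj r = kron (basis_proj (fst r)) (basis_proj (snd r))"
  by (cases r) (simp add: basis_proj_pair)

definition Mr :: "complex^'a::finite^'a \<Rightarrow> complex^'a^'a \<Rightarrow> complex^'b::finite^'b \<Rightarrow> complex^'b^'b
   \<Rightarrow> bool \<times> bool \<Rightarrow> complex^(('a\<times>'b)\<times>'e::finite)^(('a\<times>'b)\<times>'e)" where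
  "Mr Vi Vj Wi Wj r = kron (kron (if fst r then Vj else Vi) (if snd r then Wj else Wi)) (mat 1)"

lemma circ: "dh_circuit Vi Vj Wi Wj g =
  (\<Sum>r\<in>UNIV. kron (kron (amat g (fst r)) (amat g (snd r))) (Mr Vi Vj Wi Wj r))"
proof (cases g)
  case True
  then show ?thesis
    by (simp add: dh_circuit_def dh_ctrl_def Mr_def[symmetric] mult_sum_left mult_sum_right
        kron_mult basis_proj_split[of "r" for r] amat_def matrix_mul_assoc)
next
  case False
  have "(mat 1 :: complex^((bool\<times>bool)\<times>(('a\<times>'b)\<times>'c))^((bool\<times>bool)\<times>(('a\<times>'b)\<times>'c)))
       = kron (kron (mat 1) (mat 1)) (mat 1)" by (simp add: kron_mat1)
  with False show ?thesis
    by (simp add: dh_circuit_def dh_ctrl_def Mr_def[symmetric] mult_sum_left mult_sum_right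
        kron_mult basis_proj_split[of "r" for r] amat_def matrix_mul_assoc)
qed

definition beta :: "bool \<Rightarrow> bool \<Rightarrow> bool \<Rightarrow> bool \<Rightarrow> complex" where
  "beta g b x x' = amat g x $ b $ False * cnj (amat g x' $ b $ False)"

lemma out_eq: "dh_output Vi Vj Wi Wj g \<rho> =
  (\<Sum>r\<in>UNIV. \<Sum>r'\<in>UNIV. kron (kron (amat g (fst r)) (amat g (snd r)) ** basis_proj (False,False)
      ** cadj (kron (amat g (fst r')) (amat g (snd r'))))
     (Mr Vi Vj Wi Wj r ** \<rho> ** cadj (Mr Vi Vj Wi Wj r')))"
  unfolding dh_output_def circ cadj_sum mult_sum_left
  by (simp add: mult_sum_right kron_mult cadj_kron)

lemma trace_out: "ctrace (kron (basis_proj b) Q ** dh_output Vi Vj Wi Wj g \<rho>) =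
  (\<Sum>r\<in>UNIV. \<Sum>r'\<in>UNIV. beta g (fst b) (fst r) (fst r') * beta g (snd b) (snd r) (snd r')
     * ctrace (Q ** Mr Vi Vj Wi Wj r ** \<rho> ** cadj (Mr Vi Vj Wi Wj r')))"
  unfolding out_eq
  by (simp add: mult_sum_right ctrace_sum kron_mult ctrace_kron cadj_kron matrix_mul_assoc
     basis_proj_split[of b] basis_proj_pair proj_trace beta_def)

lemma UNIV_bool2: "(UNIV::(bool\<times>bool) set) = {(False,False),(False,True),(True,False),(True,True)}"
  by auto

definition gam :: "bool \<Rightarrow> bool\<times>bool \<Rightarrow> bool\<times>bool \<Rightarrow> complex" where
  "gam g r r' = (\<Sum>b\<in>UNIV. (-1) ^ (of_bool (fst b) + of_bool (snd b))
      * beta g (fst b) (fst r) (fst r') * beta g (snd b) (snd r) (snd r'))"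

lemma gam_val: "gam g r r' = (if fst r \<noteq> fst r' \<and> snd r \<noteq> snd r'
     then (if g \<and> fst r = snd r then -1/4 else 1/4) else 0)"
  by (cases g; cases r; cases r'; simp add: gam_def UNIV_bool2 beta_def amat_entry; simp add: field_simps)

lemma spec_trace:
  assumes "X = (\<Sum>y\<in>S. y *\<^sub>R P y)"
  shows "ctrace (X ** A ** B ** C) = (\<Sum>y\<in>S. of_real y * ctrace (P y ** A ** B ** C))"
  unfolding assms by (simp add: mult_sum_left mult_scaleR_left ctrace_sum ctrace_scaleR)

lemma per_ijg:
  assumes X: "X = (\<Sum>y\<in>S. y *\<^sub>R P y)"
  shows "(\<Sum>b\<in>(UNIV::(bool\<times>bool) set). \<Sum>y\<in>S. complex_of_real pp
      * ctrace (kron (basis_proj b) (P y) ** dh_output Vi Vj Wi Wj g \<rho>)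
      * complex_of_real (\<phi> * (-1) ^ (of_bool g + of_bool (fst b) + of_bool (snd b)) * y))
   = of_real (pp * \<phi>) * (-1) ^ (of_bool g) * (\<Sum>r\<in>UNIV. \<Sum>r'\<in>UNIV. gam g r r'
        * ctrace (X ** Mr Vi Vj Wi Wj r ** \<rho> ** cadj (Mr Vi Vj Wi Wj r')))"
proof -
  let ?M = "Mr Vi Vj Wi Wj"
  have inner: "(\<Sum>y\<in>S. ctrace (kron (basis_proj b) (P y) ** dh_output Vi Vj Wi Wj g \<rho>) * of_real y)
     = (\<Sum>r\<in>UNIV. \<Sum>r'\<in>UNIV. beta g (fst b) (fst r) (fst r') * beta g (snd b) (snd r) (snd r')
          * ctrace (X ** ?M r ** \<rho> ** cadj (?M r')))" for b
  proof -
    have "(\<Sum>y\<in>S. ctrace (kron (basis_proj b) (P y) ** dh_output Vi Vj Wi Wj g \<rho>) * of_real y)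
      = (\<Sum>y\<in>S. \<Sum>r\<in>UNIV. \<Sum>r'\<in>UNIV. beta g (fst b) (fst r) (fst r') * beta g (snd b) (snd r) (snd r')
          * (of_real y * ctrace (P y ** ?M r ** \<rho> ** cadj (?M r'))))"
      by (simp add: trace_out sum_distrib_right sum_distrib_left mult_ac)
    also have "\<dots> = (\<Sum>r\<in>UNIV. \<Sum>r'\<in>UNIV. \<Sum>y\<in>S. beta g (fst b) (fst r) (fst r') * beta g (snd b) (snd r) (snd r')
          * (of_real y * ctrace (P y ** ?M r ** \<rho> ** cadj (?M r'))))"
      by (subst sum.swap, subst sum.swap, simp add: sum.swap[of _ S])
    also have "\<dots> = (\<Sum>r\<in>UNIV. \<Sum>r'\<in>UNIV. beta g (fst b) (fst r) (fst r') * beta g (snd b) (snd r) (snd r')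
          * ctrace (X ** ?M r ** \<rho> ** cadj (?M r')))"
      by (simp add: spec_trace[OF X] sum_distrib_left)
    finally show ?thesis .
  qed
  have "(\<Sum>b\<in>(UNIV::(bool\<times>bool) set). \<Sum>y\<in>S. complex_of_real pp
      * ctrace (kron (basis_proj b) (P y) ** dh_output Vi Vj Wi Wj g \<rho>)
      * complex_of_real (\<phi> * (-1) ^ (of_bool g + of_bool (fst b) + of_bool (snd b)) * y))
    = (\<Sum>b\<in>(UNIV::(bool\<times>bool) set). of_real (pp * \<phi>) * (-1) ^ (of_bool g) * (-1) ^ (of_bool (fst b) + of_bool (snd b))
       * (\<Sum>y\<in>S. ctrace (kron (basis_proj b) (P y) ** dh_output Vi Vj Wi Wj g \<rho>) * of_real y))"
    by (simp add: sum_distrib_left power_add mult_ac)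
  also have "\<dots> = (\<Sum>b\<in>(UNIV::(bool\<times>bool) set). \<Sum>r\<in>UNIV. \<Sum>r'\<in>UNIV. of_real (pp * \<phi>) * (-1) ^ (of_bool g) *
       ((-1) ^ (of_bool (fst b) + of_bool (snd b)) * beta g (fst b) (fst r) (fst r') * beta g (snd b) (snd r) (snd r'))
          * ctrace (X ** ?M r ** \<rho> ** cadj (?M r')))"
    by (simp only: inner) (simp add: sum_distrib_left mult_ac)
  also have "\<dots> = (\<Sum>r\<in>UNIV. \<Sum>r'\<in>UNIV. \<Sum>b\<in>(UNIV::(bool\<times>bool) set). of_real (pp * \<phi>) * (-1) ^ (of_bool g) *
       ((-1) ^ (of_bool (fst b) + of_bool (snd b)) * beta g (fst b) (fst r) (fst r') * beta g (snd b) (snd r) (snd r'))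
          * ctrace (X ** ?M r ** \<rho> ** cadj (?M r')))"
    by (rule trans[OF sum.swap], rule sum.cong[OF refl], rule sum.swap)
  also have "\<dots> = of_real (pp * \<phi>) * (-1) ^ (of_bool g) * (\<Sum>r\<in>UNIV. \<Sum>r'\<in>UNIV. gam g r r'
        * ctrace (X ** ?M r ** \<rho> ** cadj (?M r')))"
    by (simp add: gam_def sum_distrib_left sum_distrib_right mult_ac)
  finally show ?thesis .
qed

lemma per_ij_abs:
  fixes \<tau> :: "bool\<times>bool \<Rightarrow> bool\<times>bool \<Rightarrow> complex" and \<phi> ci cj :: real
  assumes phi: "\<phi> \<noteq> 0" and pF: "p False = ci*cj/\<phi>" and pT: "p True = (if same then 0 else ci*cj/\<phi>)"
    and same: "same \<Longrightarrow> (\<And>r r'. \<tau> r r' = \<tau> (False,False) (True,True))"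
  shows "(\<Sum>g\<in>UNIV. of_real (p g * \<phi>) * (-1) ^ (of_bool g) * (\<Sum>r\<in>UNIV. \<Sum>r'\<in>UNIV. gam g r r' * \<tau> r r'))
     = of_real (ci*cj) * (\<tau> (False,False) (True,True) + \<tau> (True,True) (False,False)) / 2"
proof -
  let ?a = "\<tau> (False,False) (True,True)" and ?b = "\<tau> (False,True) (True,False)"
    and ?c = "\<tau> (True,False) (False,True)" and ?d = "\<tau> (True,True) (False,False)"
  have expand: "(\<Sum>g\<in>UNIV. of_real (p g * \<phi>) * (-1) ^ (of_bool g) * (\<Sum>r\<in>UNIV. \<Sum>r'\<in>UNIV. gam g r r' * \<tau> r r'))
     = of_real (p False * \<phi>) * ((?a + ?b + ?c + ?d) / 4) - of_real (p True * \<phi>) * ((- ?a + ?b + ?c - ?d) / 4)"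
    by (simp add: UNIV_bool UNIV_bool2 gam_val) (simp add: field_simps)
  show ?thesis
  proof (cases same)
    case True
    have "?b = ?a" "?c = ?a" "?d = ?a" using same[OF True] by blast+
    then show ?thesis unfolding expand using phi by (simp add: pF pT True field_simps)
  next
    case False
    show ?thesis unfolding expand using phi by (simp add: pF pT False field_simps)
  qed
qed

lemma sq_sum_ge: "(\<forall>i<m. (c::nat\<Rightarrow>real) i \<ge> 0) \<Longrightarrow> (\<Sum>i<m. (c i)\<^sup>2) \<le> (\<Sum>i<m. c i)\<^sup>2"
proof (induction m)
  case 0 then show ?case by simp
next
  case (Suc m)
  then have h: "(\<Sum>i<m. (c i)\<^sup>2) \<le> (\<Sum>i<m. c i)\<^sup>2" "c m \<ge> 0" "(\<Sum>i<m. c i) \<ge> 0"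
    by (auto intro: sum_nonneg)
  have "(\<Sum>i<Suc m. c i)\<^sup>2 = (\<Sum>i<m. c i)\<^sup>2 + 2 * (\<Sum>i<m. c i) * c m + (c m)\<^sup>2"
    by (simp add: power2_eq_square algebra_simps)
  moreover have "2 * (\<Sum>i<m. c i) * c m \<ge> 0" using h by simp
  moreover have "(\<Sum>i<Suc m. (c i)\<^sup>2) = (\<Sum>i<m. (c i)\<^sup>2) + (c m)\<^sup>2" by simp
  ultimately show ?case using h by linarith
qed

theorem lemma5:
  fixes U :: "complex^('a::finite\<times>'b::finite)^('a\<times>'b)"
    and m :: nat and c :: "nat \<Rightarrow> real"
    and V :: "nat \<Rightarrow> complex^'a^'a" and W :: "nat \<Rightarrow> complex^'b^'b"
    and X :: "complex^(('a\<times>'b)\<times>'e::finite)^(('a\<times>'b)\<times>'e)"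
    and \<rho> :: "complex^(('a\<times>'b)\<times>'e)^(('a\<times>'b)\<times>'e)"
    and \<phi> :: real
    and p :: "nat \<Rightarrow> nat \<Rightarrow> bool \<Rightarrow> real"
    and S :: "real set" and P :: "real \<Rightarrow> complex^(('a\<times>'b)\<times>'e)^(('a\<times>'b)\<times>'e)"
  assumes U_unitary: "unitary_op U"
    and decomp: "U = (\<Sum>i<m. (c i) *\<^sub>R kron (V i) (W i))"
    and c_pos: "\<And>i. i < m \<Longrightarrow> c i > 0"
    and V_unitary: "\<And>i. i < m \<Longrightarrow> unitary_op (V i)"
    and W_unitary: "\<And>i. i < m \<Longrightarrow> unitary_op (W i)"
    and phi_def: "\<phi> = 2 * (\<Sum>i<m. c i)\<^sup>2 - (\<Sum>i<m. (c i)\<^sup>2)"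
    and p_def: "\<And>i j g. p i j g = (if i = j \<and> g then 0 else c i * c j / \<phi>)"
    and X_herm: "hermitian_op X"
    and rho_density: "density_op \<rho>"
    \<comment> \<open>(S, P) is the spectral decomposition of X: S = spec(X), P y the eigenprojector\<close>
    and S_finite: "finite S"
    and P_herm: "\<And>y. y \<in> S \<Longrightarrow> hermitian_op (P y)"
    and P_idem: "\<And>y. y \<in> S \<Longrightarrow> P y ** P y = P y"
    and P_nonzero: "\<And>y. y \<in> S \<Longrightarrow> P y \<noteq> 0"
    and P_orth: "\<And>y y'. y \<in> S \<Longrightarrow> y' \<in> S \<Longrightarrow> y \<noteq> y' \<Longrightarrow> P y ** P y' = 0"
    and P_complete: "(\<Sum>y\<in>S. P y) = mat 1"
    and X_spectral: "X = (\<Sum>y\<in>S. y *\<^sub>R P y)"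
  shows "(\<Sum>i<m. \<Sum>j<m. \<Sum>g\<in>UNIV. \<Sum>b\<in>(UNIV::(bool\<times>bool) set). \<Sum>y\<in>S.
            complex_of_real (p i j g)
            * ctrace (kron (basis_proj b) (P y) ** dh_output (V i) (V j) (W i) (W j) g \<rho>)
            * complex_of_real (\<phi> * (-1) ^ (of_bool g + of_bool (fst b) + of_bool (snd b)) * y))
         = ctrace (X ** kron U (mat 1) ** \<rho> ** cadj (kron U (mat 1)))"
proof -
  have m_pos: "m > 0"
  proof (rule ccontr)
    assume "\<not> m > 0"
    then have "U = 0" using decomp by simp
    then have "(mat 1 :: complex^('a\<times>'b)^('a\<times>'b)) = 0"
      using U_unitary by (simp add: unitary_op_def)
    then have "(mat 1 :: complex^('a\<times>'b)^('a\<times>'b)) $ undefined $ undefined = 0" by simp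
    then show False by (simp add: mat_def)
  qed
  have phi_pos: "\<phi> > 0"
  proof -
    have "(\<Sum>i<m. (c i)\<^sup>2) \<le> (\<Sum>i<m. c i)\<^sup>2"
      by (rule sq_sum_ge) (use c_pos in \<open>auto intro: less_imp_le\<close>)
    moreover have "(\<Sum>i<m. c i) > 0"
      using m_pos c_pos by (intro sum_pos) auto
    ultimately show ?thesis unfolding phi_def by (simp add: power2_eq_square) (smt (verit) mult_pos_pos)
  qed
  define K where "K i = (kron (kron (V i) (W i)) (mat 1) :: complex^(('a\<times>'b)\<times>'e)^(('a\<times>'b)\<times>'e))" for i
  define T where "T i j = ctrace (X ** K i ** \<rho> ** cadj (K j))" for i j
  have step: "(\<Sum>g\<in>UNIV. \<Sum>b\<in>(UNIV::(bool\<times>bool) set). \<Sum>y\<in>S.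
            complex_of_real (p i j g)
            * ctrace (kron (basis_proj b) (P y) ** dh_output (V i) (V j) (W i) (W j) g \<rho>)
            * complex_of_real (\<phi> * (-1) ^ (of_bool g + of_bool (fst b) + of_bool (snd b)) * y))
      = of_real (c i * c j) * (T i j + T j i) / 2" for i j
  proof -
    let ?\<tau> = "\<lambda>r r'. ctrace (X ** Mr (V i) (V j) (W i) (W j) r ** \<rho> ** cadj (Mr (V i) (V j) (W i) (W j) r'))"
    have "(\<Sum>g\<in>UNIV. \<Sum>b\<in>(UNIV::(bool\<times>bool) set). \<Sum>y\<in>S.
            complex_of_real (p i j g)
            * ctrace (kron (basis_proj b) (P y) ** dh_output (V i) (V j) (W i) (W j) g \<rho>)
            * complex_of_real (\<phi> * (-1) ^ (of_bool g + of_bool (fst b) + of_bool (snd b)) * y))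
       = (\<Sum>g\<in>UNIV. of_real (p i j g * \<phi>) * (-1) ^ (of_bool g) * (\<Sum>r\<in>UNIV. \<Sum>r'\<in>UNIV. gam g r r' * ?\<tau> r r'))"
      by (simp only: per_ijg[OF X_spectral])
    also have "\<dots> = of_real (c i * c j) * (?\<tau> (False,False) (True,True) + ?\<tau> (True,True) (False,False)) / 2"
      by (rule per_ij_abs[where same = "i = j"]) (use phi_pos in \<open>auto simp: p_def Mr_def\<close>)
    also have "\<dots> = of_real (c i * c j) * (T i j + T j i) / 2"
      by (simp add: T_def K_def Mr_def)
    finally show ?thesis .
  qed
  have lhs: "(\<Sum>i<m. \<Sum>j<m. \<Sum>g\<in>UNIV. \<Sum>b\<in>(UNIV::(bool\<times>bool) set). \<Sum>y\<in>S.
            complex_of_real (p i j g)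
            * ctrace (kron (basis_proj b) (P y) ** dh_output (V i) (V j) (W i) (W j) g \<rho>)
            * complex_of_real (\<phi> * (-1) ^ (of_bool g + of_bool (fst b) + of_bool (snd b)) * y))
      = (\<Sum>i<m. \<Sum>j<m. of_real (c i * c j) * T i j)"
  proof -
    have "(\<Sum>i<m. \<Sum>j<m. of_real (c i * c j) * (T i j + T j i) / 2)
        = (\<Sum>i<m. \<Sum>j<m. of_real (c i * c j) * T i j) / 2 + (\<Sum>i<m. \<Sum>j<m. of_real (c i * c j) * T j i) / 2"
      unfolding distrib_left add_divide_distrib sum.distrib sum_divide_distrib ..
    also have "(\<Sum>i<m. \<Sum>j<m. of_real (c i * c j) * T j i) = (\<Sum>i<m. \<Sum>j<m. of_real (c i * c j) * T i j)"
      by (subst sum.swap) (simp add: mult.commute)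
    finally show ?thesis unfolding step by simp
  qed
  have KU: "kron U (mat 1) = (\<Sum>i<m. c i *\<^sub>R K i)"
    by (simp add: decomp K_def kron_sum_left kron_scaleR_left)
  have rhs: "ctrace (X ** kron U (mat 1) ** \<rho> ** cadj (kron U (mat 1))) = (\<Sum>i<m. \<Sum>j<m. of_real (c i * c j) * T i j)"
    unfolding KU T_def
    by (simp add: cadj_sum cadj_scaleR mult_sum_left mult_sum_right mult_scaleR_left mult_scaleR_right
        ctrace_sum ctrace_scaleR mult_ac sum_distrib_left) (subst sum.swap, simp add: mult_ac)
  show ?thesis using lhs rhs by simp
qed

end
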